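(* Assume the standing setup (equivariant system $f$ with state symmetry $\phi$, input symmetry $\psi$, and equivariant lift $\Lambda$). Let $u:[0,\infty)\to\mathbb{L}$ be an input signal and $\xi(t)$ a trajectory of $\dot\xi=f_{u(t)}(\xi)$. Fix $\mathring{\xi}\in\mathcal{M}$ and let $\Delta:[0,\infty)\to\mathfrak{g}$ be any (sufficiently regular) signal. Let $\hat X(t)\in\mathcal{G}$ solve $$\dot{\hat X} = \mathrm{D}L_{\hat X}\,\Lambda(\phi(\hat X,\mathring{\xi}),u) + \mathrm{D}R_{\hat X}\,\Delta,\qquad \hat X(0)=\mathrm{id}.$$ Define the global state error $e:=\phi(\hat X^{-1},\xi)\in\mathcal{M}$ and the origin velocity $\mathring{u}:=\psi(\hat X^{-1},u)\in\mathbb{L}$. Then $$\dot e = \mathrm{D}_{E}\big|_{\mathrm{id}}\phi(E,e)\,\big[\Lambda(e,\mathring{u})-\Lambda(\mathring{\xi},\mathring{u})-\Delta\big],$$ so that the dynamics of $e$ depend only on $e$, $\mathring{u}$ and $\Delta$.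
   Context: Standing setup. $\mathcal{G}$ is a Lie group with identity $\mathrm{id}$ and Lie algebra $\mathfrak{g}$ (identified with $T_{\mathrm{id}}\mathcal{G}$). $L_X(Y)=XY$, $R_X(Y)=YX$; $\mathrm{D}L_X,\mathrm{D}R_X$ applied to elements of $\mathfrak{g}$ denote the differentials at $\mathrm{id}$. $\mathrm{Ad}_X[U]:=\mathrm{D}L_X\cdot\mathrm{D}R_{X^{-1}}[U]$. A right action $\phi:\mathcal{G}\times\mathcal{M}\to\mathcal{M}$ satisfies $\phi(Y,\phi(X,\xi))=\phi(XY,\xi)$, $\phi(\mathrm{id},\xi)=\xi$; partial maps are $\phi_X(\xi)=\phi(X,\xi)$ and $\phi_\xi(X)=\phi(X,\xi)$. $\mathcal{M}$ is a smooth $m$-dimensional manifold on which $\phi$ is a smooth transitive right action. $\mathbb{L}$ is a real vector space (input space) and $f:\mathbb{L}\to\mathfrak{X}(\mathcal{M})$, $u\mapsto f_u$, is an affine system function $f_u=f_0+\sum_i u_if_i$. The system is equivariant: there is a smooth right action $\psi:\mathcal{G}\times\mathbb{L}\to\mathbb{L}$ with $\mathrm{D}\phi_X\, f_u(\xi)=f_{\psi_X(u)}(\phi_X(\xi))$ for all $u,\xi,X$. A lift is a smooth map $\Lambda:\mathcal{M}\times\mathbb{L}\to\mathfrak{g}$ with $\mathrm{D}_X|_{\mathrm{id}}\phi_\xi(X)[\Lambda(\xi,u)]=f_u(\xi)$ for all $\xi,u$; it is equivariant if $\Lambda(\phi(X,\xi),\psi(X,u))=\mathrm{Ad}_{X^{-1}}\Lambda(\xi,u)$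 for all $X,\xi,u$. Signals are assumed regular enough that all ODEs have unique solutions for all time. *)

theory Defs
  imports "HOL-Analysis.Analysis"
begin

text \<open>Model: every smooth manifold is realised as an embedded submanifold of a Euclidean
space (Whitney); smooth maps between such (closed) submanifolds are given by smooth maps
of the ambient spaces.  Differentials are Frechet derivatives of these ambient maps,
applied only to tangent vectors, where they do not depend on the chosen extension.\<close>

fun iter_pd :: "'a::euclidean_space list \<Rightarrow> ('a \<Rightarrow> 'b::real_normed_vector) \<Rightarrow> 'a \<Rightarrow> 'b" where
  "iter_pd [] f = f"
| "iter_pd (v # vs) f = (\<lambda>x. frechet_derivative (iter_pd vs f) (at x) v)"

definition smooth_on :: "'a::euclidean_space set \<Rightarrow> ('a \<Rightarrow> 'b::real_normed_vector) \<Rightarrow> bool" where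
  "smooth_on U f \<longleftrightarrow> (\<forall>vs. set vs \<subseteq> Basis \<longrightarrow>
      (\<forall>x\<in>U. iter_pd vs f differentiable (at x)) \<and> continuous_on U (iter_pd vs f))"

abbreviation smooth :: "('a::euclidean_space \<Rightarrow> 'b::real_normed_vector) \<Rightarrow> bool" where
  "smooth f \<equiv> smooth_on UNIV f"

definition embedded_submanifold :: "nat \<Rightarrow> 'a::euclidean_space set \<Rightarrow> bool" where
  "embedded_submanifold d S \<longleftrightarrow> (\<forall>x\<in>S. \<exists>U V (\<psi>::'a \<Rightarrow> 'a) \<psi>' L.
      open U \<and> x \<in> U \<and> open V \<and> \<psi> ` U = V \<and>
      (\<forall>y\<in>U. \<psi>' (\<psi> y) = y) \<and> (\<forall>z\<in>V. \<psi> (\<psi>' z) = z) \<and>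
      smooth_on U \<psi> \<and> smooth_on V \<psi>' \<and>
      subspace L \<and> dim L = d \<and> \<psi> ` (U \<inter> S) = V \<inter> L)"

definition tangent_space :: "'a::real_normed_vector set \<Rightarrow> 'a \<Rightarrow> 'a set" where
  "tangent_space S x = {v. \<exists>\<gamma>::real \<Rightarrow> 'a. (\<forall>t. \<gamma> t \<in> S) \<and> \<gamma> 0 = x \<and>
                             (\<gamma> has_vector_derivative v) (at 0)}"

definition lie_group :: "'g::euclidean_space set \<Rightarrow> ('g \<Rightarrow> 'g \<Rightarrow> 'g) \<Rightarrow> ('g \<Rightarrow> 'g) \<Rightarrow> 'g \<Rightarrow> bool" where
  "lie_group G mul ginv e \<longleftrightarrow>
     (\<exists>d. embedded_submanifold d G) \<and> e \<in> G \<and>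
     (\<forall>X\<in>G. \<forall>Y\<in>G. mul X Y \<in> G) \<and> (\<forall>X\<in>G. ginv X \<in> G) \<and>
     (\<forall>X\<in>G. \<forall>Y\<in>G. \<forall>Z\<in>G. mul (mul X Y) Z = mul X (mul Y Z)) \<and>
     (\<forall>X\<in>G. mul e X = X \<and> mul X e = X) \<and>
     (\<forall>X\<in>G. mul X (ginv X) = e \<and> mul (ginv X) X = e) \<and>
     smooth (\<lambda>p. mul (fst p) (snd p)) \<and> smooth ginv"

definition lie_algebra :: "'g::euclidean_space set \<Rightarrow> 'g \<Rightarrow> 'g set" where
  "lie_algebra G e = tangent_space G e"

definition DL :: "('g::euclidean_space \<Rightarrow> 'g \<Rightarrow> 'g) \<Rightarrow> 'g \<Rightarrow> 'g \<Rightarrow> 'g \<Rightarrow> 'g" where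
  "DL mul e X U = frechet_derivative (\<lambda>Y. mul X Y) (at e) U"

definition DR :: "('g::euclidean_space \<Rightarrow> 'g \<Rightarrow> 'g) \<Rightarrow> 'g \<Rightarrow> 'g \<Rightarrow> 'g \<Rightarrow> 'g" where
  "DR mul e X U = frechet_derivative (\<lambda>Y. mul Y X) (at e) U"

definition Ad :: "('g::euclidean_space \<Rightarrow> 'g \<Rightarrow> 'g) \<Rightarrow> ('g \<Rightarrow> 'g) \<Rightarrow> 'g \<Rightarrow> 'g \<Rightarrow> 'g \<Rightarrow> 'g" where
  "Ad mul ginv e X U =
     frechet_derivative (\<lambda>Y. mul X Y) (at (ginv X)) (frechet_derivative (\<lambda>Y. mul Y (ginv X)) (at e) U)"

definition right_action :: "'g set \<Rightarrow> ('g \<Rightarrow> 'g \<Rightarrow> 'g) \<Rightarrow> 'g \<Rightarrow> 'm set \<Rightarrow> ('g \<Rightarrow> 'm \<Rightarrow> 'm) \<Rightarrow> bool" where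
  "right_action G mul e M phi \<longleftrightarrow>
     (\<forall>X\<in>G. \<forall>\<xi>\<in>M. phi X \<xi> \<in> M) \<and>
     (\<forall>X\<in>G. \<forall>Y\<in>G. \<forall>\<xi>\<in>M. phi Y (phi X \<xi>) = phi (mul X Y) \<xi>) \<and>
     (\<forall>\<xi>\<in>M. phi e \<xi> = \<xi>)"

end

theory Submission
  imports Defs
begin


lemma smooth_diff: "smooth f \<Longrightarrow> f differentiable (at x)"
  unfolding smooth_on_def by (metis empty_iff empty_set iter_pd.simps(1) subsetI UNIV_I)

lemma FD: "f differentiable (at x) \<Longrightarrow> (f has_derivative frechet_derivative f (at x)) (at x)"
  using frechet_derivative_works by blast

lemma FD_lin: "f differentiable (at x) \<Longrightarrow> linear (frechet_derivative f (at x))"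
  using FD has_derivative_linear by blast

lemma chain_vec:
  assumes "(\<gamma> has_vector_derivative v) (at t within s)" "F differentiable (at (\<gamma> t))"
  shows "((\<lambda>r. F (\<gamma> r)) has_vector_derivative frechet_derivative F (at (\<gamma> t)) v) (at t within s)"
  using vector_derivative_diff_chain_within[OF assms(1) has_derivative_at_withinI[OF FD[OF assms(2)]]]
  by (simp add: o_def)

lemma tangent_eq:
  assumes "F differentiable (at x)" "H differentiable (at x)" "\<forall>z\<in>S. F z = H z"
    "v \<in> tangent_space S x"
  shows "frechet_derivative F (at x) v = frechet_derivative H (at x) v"
proof -
  obtain \<gamma> where g: "\<forall>t. \<gamma> t \<in> S" "\<gamma> 0 = x" "(\<gamma> has_vector_derivative v) (at 0)"
    using assms(4) unfolding tangent_space_def by blast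
  have "((\<lambda>r. F (\<gamma> r)) has_vector_derivative frechet_derivative F (at x) v) (at 0)"
    using chain_vec[OF g(3)] assms(1) g(2) by simp
  moreover have "((\<lambda>r. H (\<gamma> r)) has_vector_derivative frechet_derivative H (at x) v) (at 0)"
    using chain_vec[OF g(3)] assms(2) g(2) by simp
  moreover have "(\<lambda>r. F (\<gamma> r)) = (\<lambda>r. H (\<gamma> r))" using assms(3) g(1) by auto
  ultimately show ?thesis using vector_derivative_unique_at by metis
qed

lemma tangent_map:
  assumes "F differentiable (at x)" "\<forall>z\<in>S. F z \<in> T" "v \<in> tangent_space S x"
  shows "frechet_derivative F (at x) v \<in> tangent_space T (F x)"
proof -
  obtain \<gamma> where g: "\<forall>t. \<gamma> t \<in> S" "\<gamma> 0 = x" "(\<gamma> has_vector_derivative v) (at 0)"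
    using assms(3) unfolding tangent_space_def by blast
  have "((\<lambda>r. F (\<gamma> r)) has_vector_derivative frechet_derivative F (at x) v) (at 0)"
    using chain_vec[OF g(3)] assms(1) g(2) by simp
  then show ?thesis unfolding tangent_space_def using g assms(2)
    by (intro CollectI exI[of _ "\<lambda>r. F (\<gamma> r)"]) auto
qed

lemma D1:
  assumes "g differentiable (at x)" "f differentiable (at (g x))"
  shows "frechet_derivative (\<lambda>z. f (g z)) (at x) v = frechet_derivative f (at (g x)) (frechet_derivative g (at x) v)"
proof -
  have "((f \<circ> g) has_derivative (frechet_derivative f (at (g x)) \<circ> frechet_derivative g (at x))) (at x)"
    using diff_chain_at[OF FD[OF assms(1)] FD[OF assms(2)]] .
  from frechet_derivative_at[OF this] show ?thesis by (simp add: o_def fun_eq_iff)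
qed

lemma D2:
  assumes "(\<lambda>p. P (fst p) (snd p)) differentiable (at (g1 x, g2 x))"
    "g1 differentiable (at x)" "g2 differentiable (at x)"
  shows "frechet_derivative (\<lambda>z. P (g1 z) (g2 z)) (at x) v =
    frechet_derivative (\<lambda>p. P (fst p) (snd p)) (at (g1 x, g2 x))
      (frechet_derivative g1 (at x) v, frechet_derivative g2 (at x) v)"
proof -
  have p: "((\<lambda>z. (g1 z, g2 z)) has_derivative (\<lambda>v. (frechet_derivative g1 (at x) v, frechet_derivative g2 (at x) v))) (at x)"
    by (intro has_derivative_Pair FD assms)
  have "(\<lambda>p. P (fst p) (snd p)) differentiable (at ((\<lambda>z. (g1 z, g2 z)) x))" using assms(1) by simp
  have pd: "(\<lambda>z. (g1 z, g2 z)) differentiable (at x)" using p by (auto simp: differentiable_def)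
  from D1[where f="\<lambda>p. P (fst p) (snd p)" and g="\<lambda>z. (g1 z, g2 z)", of x, OF pd assms(1), of v] have "frechet_derivative (\<lambda>z. P (fst (g1 z, g2 z)) (snd (g1 z, g2 z))) (at x) v =
    frechet_derivative (\<lambda>p. P (fst p) (snd p)) (at (g1 x, g2 x))
      (frechet_derivative (\<lambda>z. (g1 z, g2 z)) (at x) v)"
    by simp
  moreover have "frechet_derivative (\<lambda>z. (g1 z, g2 z)) (at x) v = (frechet_derivative g1 (at x) v, frechet_derivative g2 (at x) v)"
    using frechet_derivative_at[OF p] by (rule fun_cong[OF sym])
  ultimately show ?thesis by simp
qed

lemma diff2:
  assumes "(\<lambda>p. P (fst p) (snd p)) differentiable (at (g1 x, g2 x))"
    "g1 differentiable (at x)" "g2 differentiable (at x)"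
  shows "(\<lambda>z. P (g1 z) (g2 z)) differentiable (at x)"
proof -
  have p: "(\<lambda>z. (g1 z, g2 z)) differentiable (at x)"
    using assms(2,3) unfolding differentiable_def by (blast intro: has_derivative_Pair)
  show ?thesis using differentiable_chain_at[OF p, of "\<lambda>p. P (fst p) (snd p)"] assms(1) by (simp add: o_def)
qed

lemma diff1: "g differentiable (at x) \<Longrightarrow> f differentiable (at (g x)) \<Longrightarrow> (\<lambda>z. f (g z)) differentiable (at x)"
  using differentiable_chain_at[of g x f] by (simp add: o_def)

lemma FD_const: "frechet_derivative (\<lambda>z. c) (at x) = (\<lambda>v. 0)"
  using frechet_derivative_at[OF has_derivative_const] by metis

lemma FD_id: "frechet_derivative (\<lambda>z. z) (at x) = (\<lambda>v. v)"
  using frechet_derivative_at[OF has_derivative_ident] by metis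



lemma dsm: "smooth (\<lambda>p. P (fst p) (snd p)) \<Longrightarrow> g1 differentiable (at x) \<Longrightarrow> g2 differentiable (at x)
  \<Longrightarrow> (\<lambda>z. P (g1 z) (g2 z)) differentiable (at x)"
  by (rule diff2) (auto intro: smooth_diff)

lemma dsm1: "smooth (\<lambda>p. P (fst p) (snd p)) \<Longrightarrow> (\<lambda>z. P z c) differentiable (at x)"
  using dsm[of P "\<lambda>z. z" x "\<lambda>z. c"] by simp

lemma dsm2: "smooth (\<lambda>p. P (fst p) (snd p)) \<Longrightarrow> (\<lambda>z. P c z) differentiable (at x)"
  using dsm[of P "\<lambda>z. c" x "\<lambda>z. z"] by simp

lemma Dsm: "smooth (\<lambda>p. P (fst p) (snd p)) \<Longrightarrow> g1 differentiable (at x) \<Longrightarrow> g2 differentiable (at x)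
  \<Longrightarrow> frechet_derivative (\<lambda>z. P (g1 z) (g2 z)) (at x) v =
    frechet_derivative (\<lambda>p. P (fst p) (snd p)) (at (g1 x, g2 x))
      (frechet_derivative g1 (at x) v, frechet_derivative g2 (at x) v)"
  by (rule D2) (auto intro: smooth_diff)

lemma Dsm1: "smooth (\<lambda>p. P (fst p) (snd p)) \<Longrightarrow>
  frechet_derivative (\<lambda>z. P z c) (at a) v = frechet_derivative (\<lambda>p. P (fst p) (snd p)) (at (a, c)) (v, 0)"
  using Dsm[of P "\<lambda>z. z" a "\<lambda>z. c" v] by (simp add: FD_id FD_const)

lemma Dsm2: "smooth (\<lambda>p. P (fst p) (snd p)) \<Longrightarrow>
  frechet_derivative (\<lambda>z. P c z) (at a) v = frechet_derivative (\<lambda>p. P (fst p) (snd p)) (at (c, a)) (0, v)"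
  using Dsm[of P "\<lambda>z. c" a "\<lambda>z. z" v] by (simp add: FD_id FD_const)

lemma lin_pair: "linear L \<Longrightarrow> L (a, b) = L (a, 0) + L (0, b)"
proof -
  assume L: "linear L"
  have "(a, b) = (a, 0) + (0, b)" by simp
  then have "L (a, b) = L ((a, 0) + (0, b))" by simp
  also have "\<dots> = L (a, 0) + L (0, b)" using linear_add[OF L] .
  finally show ?thesis .
qed

lemma group_facts:
  assumes "lie_group G mul ginv e"
  shows "e \<in> G" "\<And>X Y. X \<in> G \<Longrightarrow> Y \<in> G \<Longrightarrow> mul X Y \<in> G" "\<And>X. X \<in> G \<Longrightarrow> ginv X \<in> G"
    "\<And>X Y Z. X \<in> G \<Longrightarrow> Y \<in> G \<Longrightarrow> Z \<in> G \<Longrightarrow> mul (mul X Y) Z = mul X (mul Y Z)"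
    "\<And>X. X \<in> G \<Longrightarrow> mul e X = X" "\<And>X. X \<in> G \<Longrightarrow> mul X e = X"
    "\<And>X. X \<in> G \<Longrightarrow> mul X (ginv X) = e" "\<And>X. X \<in> G \<Longrightarrow> mul (ginv X) X = e"
    "smooth (\<lambda>p. mul (fst p) (snd p))" "smooth ginv"
  using assms unfolding lie_group_def by auto

lemma group_inv:
  assumes "lie_group G mul ginv e"
  shows "ginv e = e" "\<And>X. X \<in> G \<Longrightarrow> ginv (ginv X) = X"
    "\<And>A B. A \<in> G \<Longrightarrow> B \<in> G \<Longrightarrow> ginv (mul A B) = mul (ginv B) (ginv A)"
proof -
  note g = group_facts[OF assms]
  have ge: "ginv e \<in> G" using g(1,3) by blast
  show "ginv e = e" using g(5)[OF ge] g(7)[OF g(1)] by simp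
  show "ginv (ginv X) = X" if X: "X \<in> G" for X
  proof -
    have Z: "ginv X \<in> G" using g(3) X by blast
    have W: "ginv (ginv X) \<in> G" using g(3) Z by blast
    have "ginv (ginv X) = mul e (ginv (ginv X))" using g(5)[OF W] by simp
    also have "\<dots> = mul (mul X (ginv X)) (ginv (ginv X))" using g(7)[OF X] by simp
    also have "\<dots> = mul X (mul (ginv X) (ginv (ginv X)))" using g(4)[OF X Z W] .
    also have "\<dots> = mul X e" using g(7)[OF Z] by simp
    also have "\<dots> = X" using g(6)[OF X] .
    finally show ?thesis .
  qed
  show "ginv (mul A B) = mul (ginv B) (ginv A)" if A: "A \<in> G" and B: "B \<in> G" for A B
  proof -
    have P: "mul A B \<in> G" using g(2) A B by blast
    have iA: "ginv A \<in> G" and iB: "ginv B \<in> G" using g(3) A B by auto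
    have Q: "mul (ginv B) (ginv A) \<in> G" using g(2) iA iB by blast
    have iP: "ginv (mul A B) \<in> G" using g(3) P by blast
    have "mul (mul A B) (mul (ginv B) (ginv A)) = mul A (mul B (mul (ginv B) (ginv A)))"
      using g(4)[OF A B Q] .
    also have "mul B (mul (ginv B) (ginv A)) = mul (mul B (ginv B)) (ginv A)"
      using g(4)[OF B iB iA] by simp
    also have "\<dots> = ginv A" using g(7)[OF B] g(5)[OF iA] by simp
    finally have PQ: "mul (mul A B) (mul (ginv B) (ginv A)) = e" using g(7)[OF A] by simp
    have "ginv (mul A B) = mul (ginv (mul A B)) e" using g(6)[OF iP] by simp
    also have "\<dots> = mul (ginv (mul A B)) (mul (mul A B) (mul (ginv B) (ginv A)))" using PQ by simp
    also have "\<dots> = mul (mul (ginv (mul A B)) (mul A B)) (mul (ginv B) (ginv A))"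
      using g(4)[OF iP P Q] by simp
    also have "\<dots> = mul (ginv B) (ginv A)" using g(8)[OF P] g(5)[OF Q] by simp
    finally show ?thesis .
  qed
qed



theorem mainTheorem2:
  fixes G :: "'g::euclidean_space set" and mul :: "'g \<Rightarrow> 'g \<Rightarrow> 'g"
    and ginv :: "'g \<Rightarrow> 'g" and e :: 'g
    and M :: "'m::euclidean_space set" and m :: nat
    and phi :: "'g \<Rightarrow> 'm \<Rightarrow> 'm"
    and psi :: "'g \<Rightarrow> 'l::euclidean_space \<Rightarrow> 'l"
    and f :: "'l \<Rightarrow> 'm \<Rightarrow> 'm"
    and Lam :: "'m \<Rightarrow> 'l \<Rightarrow> 'g"
    and u :: "real \<Rightarrow> 'l" and \<xi> :: "real \<Rightarrow> 'm" and \<xi>0 :: 'm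
    and \<Delta> :: "real \<Rightarrow> 'g" and Xh :: "real \<Rightarrow> 'g"
  assumes G: "lie_group G mul ginv e"
    and M: "embedded_submanifold m M"
    and phi_act: "right_action G mul e M phi"
    and phi_smooth: "smooth (\<lambda>p. phi (fst p) (snd p))"
    and phi_trans: "\<forall>\<eta>\<in>M. \<forall>\<zeta>\<in>M. \<exists>X\<in>G. phi X \<eta> = \<zeta>"
    and f_field: "\<forall>v. (\<exists>F. smooth F \<and> (\<forall>x\<in>M. F x = f v x)) \<and> (\<forall>x\<in>M. f v x \<in> tangent_space M x)"
    and f_affine: "\<exists>f0 A. (\<forall>v. \<forall>x\<in>M. f v x = f0 x + A x v) \<and> (\<forall>x. linear (A x))"
    and psi_act: "right_action G mul e UNIV psi"
    and psi_smooth: "smooth (\<lambda>p. psi (fst p) (snd p))"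
    and equiv: "\<forall>X\<in>G. \<forall>x\<in>M. \<forall>v.
                  frechet_derivative (phi X) (at x) (f v x) = f (psi X v) (phi X x)"
    and Lam_smooth: "smooth (\<lambda>p. Lam (fst p) (snd p))"
    and Lam_alg: "\<forall>x\<in>M. \<forall>v. Lam x v \<in> lie_algebra G e"
    and Lam_lift: "\<forall>x\<in>M. \<forall>v. frechet_derivative (\<lambda>X. phi X x) (at e) (Lam x v) = f v x"
    and Lam_equiv: "\<forall>X\<in>G. \<forall>x\<in>M. \<forall>v. Lam (phi X x) (psi X v) = Ad mul ginv e (ginv X) (Lam x v)"
    and traj_in: "\<forall>t\<ge>0. \<xi> t \<in> M"
    and traj: "\<forall>t\<ge>0. (\<xi> has_vector_derivative f (u t) (\<xi> t)) (at t within {0..})"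
    and xi0: "\<xi>0 \<in> M"
    and Delta_alg: "\<forall>t\<ge>0. \<Delta> t \<in> lie_algebra G e"
    and Xh_in: "\<forall>t\<ge>0. Xh t \<in> G"
    and Xh_init: "Xh 0 = e"
    and Xh_ode: "\<forall>t\<ge>0. (Xh has_vector_derivative
                   DL mul e (Xh t) (Lam (phi (Xh t) \<xi>0) (u t)) + DR mul e (Xh t) (\<Delta> t))
                   (at t within {0..})"
  shows "\<forall>t\<ge>0. ((\<lambda>s. phi (ginv (Xh s)) (\<xi> s)) has_vector_derivative
            frechet_derivative (\<lambda>E. phi E (phi (ginv (Xh t)) (\<xi> t))) (at e)
              (Lam (phi (ginv (Xh t)) (\<xi> t)) (psi (ginv (Xh t)) (u t))
               - Lam \<xi>0 (psi (ginv (Xh t)) (u t)) - \<Delta> t))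
          (at t within {0..})"
proof (intro allI impI)
  fix t :: real assume t: "t \<ge> 0"
  note g = group_facts[OF G]
  note gi = group_inv[OF G]
  have Ms: "smooth (\<lambda>p. mul (fst p) (snd p))" and Is: "smooth ginv" using g by auto
  have act1: "\<And>X \<xi>. X \<in> G \<Longrightarrow> \<xi> \<in> M \<Longrightarrow> phi X \<xi> \<in> M"
    and act2: "\<And>X Y \<xi>. X \<in> G \<Longrightarrow> Y \<in> G \<Longrightarrow> \<xi> \<in> M \<Longrightarrow> phi Y (phi X \<xi>) = phi (mul X Y) \<xi>"
    and act3: "\<And>\<xi>. \<xi> \<in> M \<Longrightarrow> phi e \<xi> = \<xi>"
    using phi_act unfolding right_action_def by auto
  have Id: "\<And>x. ginv differentiable (at x)" using Is by (rule smooth_diff)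
  have idd: "\<And>x. (\<lambda>z::'g. z) differentiable (at x)" by simp
  define X where "X = Xh t"
  define Y where "Y = ginv X"
  define xt where "xt = \<xi> t"
  define es where "es = phi Y xt"
  define uo where "uo = psi Y (u t)"
  define L1 where "L1 = Lam (phi X \<xi>0) (u t)"
  define Dt where "Dt = \<Delta> t"
  have X: "X \<in> G" using Xh_in t X_def by auto
  have Y: "Y \<in> G" using g(3) X Y_def by auto
  have xt: "xt \<in> M" using traj_in t xt_def by auto
  have es: "es \<in> M" using act1 Y xt es_def by auto
  have L1: "L1 \<in> tangent_space G e" using Lam_alg act1[OF X xi0] unfolding L1_def lie_algebra_def by blast
  have Dt: "Dt \<in> tangent_space G e" using Delta_alg t unfolding Dt_def lie_algebra_def by blast
  have W1: "Lam \<xi>0 uo \<in> tangent_space G e" using Lam_alg xi0 unfolding lie_algebra_def by blast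
  have Les: "Lam es uo \<in> tangent_space G e" using Lam_alg es unfolding lie_algebra_def by blast
  have I: "frechet_derivative ginv (at e) L = - L" if L: "L \<in> tangent_space G e" for L
  proof -
    have "frechet_derivative (\<lambda>Z. mul Z (ginv Z)) (at e) L = frechet_derivative (\<lambda>Z. e) (at e) L"
      by (rule tangent_eq[OF dsm[OF Ms idd Id] _ _ L]) (simp, use g(7) in blast)
    then have 0: "frechet_derivative (\<lambda>p. mul (fst p) (snd p)) (at (e, e)) (L, frechet_derivative ginv (at e) L) = 0"
      using Dsm[OF Ms idd Id, of e L] gi(1) by (simp add: FD_id FD_const)
    have lin: "linear (frechet_derivative (\<lambda>p. mul (fst p) (snd p)) (at (e, e)))"
      by (rule FD_lin[OF smooth_diff[OF Ms]])
    have a: "frechet_derivative (\<lambda>p. mul (fst p) (snd p)) (at (e, e)) (L, 0) = L"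
    proof -
      have "frechet_derivative (\<lambda>Z. mul Z e) (at e) L = frechet_derivative (\<lambda>Z. Z) (at e) L"
        by (rule tangent_eq[OF dsm1[OF Ms] idd _ L]) (use g(6) in blast)
      then show ?thesis using Dsm1[OF Ms, of e e L] by (simp add: FD_id)
    qed
    have wt: "frechet_derivative ginv (at e) L \<in> tangent_space G e"
      using tangent_map[OF Id _ L, of G] g(3) gi(1) by metis
    have b: "frechet_derivative (\<lambda>p. mul (fst p) (snd p)) (at (e, e)) (0, frechet_derivative ginv (at e) L)
        = frechet_derivative ginv (at e) L"
    proof -
      have "frechet_derivative (\<lambda>Z. mul e Z) (at e) (frechet_derivative ginv (at e) L)
          = frechet_derivative (\<lambda>Z. Z) (at e) (frechet_derivative ginv (at e) L)"
        by (rule tangent_eq[OF dsm2[OF Ms] idd _ wt]) (use g(5) in blast)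
      then show ?thesis using Dsm2[OF Ms, of e e] by (simp add: FD_id)
    qed
    have "L + frechet_derivative ginv (at e) L = 0"
      using 0 lin_pair[OF lin, of L "frechet_derivative ginv (at e) L"] a b by simp
    then show ?thesis by (metis add.commute add_eq_0_iff2)
  qed
  have cd: "\<And>c x. (\<lambda>z::'g. c) differentiable (at x)" by simp
  have Mx: "\<And>A x. (\<lambda>Z. mul A Z) differentiable (at x)" by (rule dsm2[OF Ms])
  have xM: "\<And>A x. (\<lambda>Z. mul Z A) differentiable (at x)" by (rule dsm1[OF Ms])
  have linL: "\<And>A x. linear (frechet_derivative (\<lambda>Z. mul A Z) (at x))" by (rule FD_lin[OF Mx])
  have linR: "\<And>A x. linear (frechet_derivative (\<lambda>Z. mul Z A) (at x))" by (rule FD_lin[OF xM])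
  have linI: "\<And>x. linear (frechet_derivative ginv (at x))" by (rule FD_lin[OF Id])
  have II: "frechet_derivative ginv (at X) (DR mul e X Dt) = - DL mul e Y Dt"
  proof -
    have "frechet_derivative (\<lambda>Z. ginv (mul Z X)) (at e) Dt = frechet_derivative (\<lambda>Z. mul Y (ginv Z)) (at e) Dt"
      by (rule tangent_eq[OF diff1[OF xM Id] diff1[OF Id Mx] _ Dt])
         (use gi(3) X g(3) Y_def in auto)
    moreover have "frechet_derivative (\<lambda>Z. ginv (mul Z X)) (at e) Dt = frechet_derivative ginv (at X) (DR mul e X Dt)"
      using D1[where g="\<lambda>Z. mul Z X" and f=ginv and x=e and v=Dt, OF xM Id] g(5)[OF X] unfolding DR_def by simp
    moreover have "frechet_derivative (\<lambda>Z. mul Y (ginv Z)) (at e) Dt = - DL mul e Y Dt"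
      using D1[where g=ginv and f="\<lambda>Z. mul Y Z" and x=e and v=Dt, OF Id Mx] gi(1) I[OF Dt] linear_neg[OF linL] unfolding DL_def by simp
    ultimately show ?thesis by simp
  qed
  have III: "frechet_derivative ginv (at X) (DL mul e X L1) = - DR mul e Y L1"
  proof -
    have "frechet_derivative (\<lambda>Z. ginv (mul X Z)) (at e) L1 = frechet_derivative (\<lambda>Z. mul (ginv Z) Y) (at e) L1"
      by (rule tangent_eq[OF diff1[OF Mx Id] diff1[OF Id xM] _ L1])
         (use gi(3) X g(3) Y_def in auto)
    moreover have "frechet_derivative (\<lambda>Z. ginv (mul X Z)) (at e) L1 = frechet_derivative ginv (at X) (DL mul e X L1)"
      using D1[where g="\<lambda>Z. mul X Z" and f=ginv and x=e and v=L1, OF Mx Id] g(6)[OF X] unfolding DL_def by simp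
    moreover have "frechet_derivative (\<lambda>Z. mul (ginv Z) Y) (at e) L1 = - DR mul e Y L1"
      using D1[where g=ginv and f="\<lambda>Z. mul Z Y" and x=e and v=L1, OF Id xM] gi(1) I[OF L1] linear_neg[OF linR] unfolding DR_def by simp
    ultimately show ?thesis by simp
  qed
  have XY: "mul X Y = e" using g(7)[OF X] Y_def by simp
  have YX: "mul Y X = e" using g(8)[OF X] Y_def by simp
  have IV: "DL mul e Y (Ad mul ginv e X L1) = DR mul e Y L1"
  proof -
    define V where "V = DR mul e Y L1"
    have V: "V \<in> tangent_space G Y"
      using tangent_map[where T=G, OF xM[of Y] _ L1] g(2) Y g(5)[OF Y] unfolding V_def DR_def by auto
    have "Ad mul ginv e X L1 = frechet_derivative (\<lambda>Z. mul X Z) (at Y) V"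
      unfolding Ad_def V_def DR_def Y_def ..
    then have "DL mul e Y (Ad mul ginv e X L1) = frechet_derivative (\<lambda>Z. mul Y (mul X Z)) (at Y) V"
      using D1[where g="\<lambda>Z. mul X Z" and f="\<lambda>Z. mul Y Z" and x=Y and v=V, OF Mx Mx] XY unfolding DL_def by simp
    also have "\<dots> = frechet_derivative (\<lambda>Z. Z) (at Y) V"
      by (rule tangent_eq[OF diff1[OF Mx Mx] idd _ V]) (use g(4) g(5) X Y YX in auto)
    finally show ?thesis unfolding V_def by (simp add: FD_id)
  qed
  have V: "Lam \<xi>0 uo = Ad mul ginv e X L1"
  proof -
    have "Lam (phi Y (phi X \<xi>0)) (psi Y (u t)) = Ad mul ginv e (ginv Y) (Lam (phi X \<xi>0) (u t))"
      using Lam_equiv Y act1[OF X xi0] by blast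
    moreover have "phi Y (phi X \<xi>0) = \<xi>0" using act2[OF X Y xi0] XY act3[OF xi0] by simp
    moreover have "ginv Y = X" using gi(2)[OF X] Y_def by simp
    ultimately show ?thesis unfolding uo_def L1_def by simp
  qed
  have VI: "frechet_derivative (\<lambda>E. phi E es) (at e) W
      = frechet_derivative (\<lambda>p. phi (fst p) (snd p)) (at (Y, xt)) (DL mul e Y W, 0)"
    if W: "W \<in> tangent_space G e" for W
  proof -
    have "frechet_derivative (\<lambda>E. phi E es) (at e) W = frechet_derivative (\<lambda>E. phi (mul Y E) xt) (at e) W"
      by (rule tangent_eq[OF dsm1[OF phi_smooth] dsm[OF phi_smooth Mx cd] _ W])
         (use act2 Y xt es_def in auto)
    also have "\<dots> = frechet_derivative (\<lambda>p. phi (fst p) (snd p)) (at (mul Y e, xt)) (DL mul e Y W, 0)"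
      using Dsm[of phi "\<lambda>Z. mul Y Z" e "\<lambda>Z. xt" W, OF phi_smooth Mx cd] unfolding DL_def by (simp add: FD_const)
    finally show ?thesis using g(6)[OF Y] by simp
  qed
  define DP where "DP = frechet_derivative (\<lambda>p. phi (fst p) (snd p)) (at (Y, xt))"
  define DF where "DF = frechet_derivative (\<lambda>E. phi E es) (at e)"
  have linDP: "linear DP" unfolding DP_def by (rule FD_lin[OF smooth_diff[OF phi_smooth]])
  have linDF: "linear DF" unfolding DF_def by (rule FD_lin[OF dsm1[OF phi_smooth]])
  define Xd where "Xd = DL mul e X L1 + DR mul e X Dt"
  have hX: "(Xh has_vector_derivative Xd) (at t within {0..})"
    using Xh_ode t unfolding Xd_def X_def L1_def Dt_def by blast
  have hI: "((\<lambda>r. ginv (Xh r)) has_vector_derivative frechet_derivative ginv (at X) Xd) (at t within {0..})"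
    using chain_vec[OF hX Id] unfolding X_def .
  have hx: "(\<xi> has_vector_derivative f (u t) xt) (at t within {0..})"
    using traj t unfolding xt_def by blast
  have hP: "((\<lambda>r. (ginv (Xh r), \<xi> r)) has_vector_derivative (frechet_derivative ginv (at X) Xd, f (u t) xt)) (at t within {0..})"
    by (rule has_vector_derivative_Pair[OF hI hx])
  have h: "((\<lambda>r. phi (ginv (Xh r)) (\<xi> r)) has_vector_derivative DP (frechet_derivative ginv (at X) Xd, f (u t) xt)) (at t within {0..})"
    using chain_vec[OF hP smooth_diff[OF phi_smooth]] unfolding DP_def Y_def X_def xt_def by simp
  have gXd: "frechet_derivative ginv (at X) Xd = - DL mul e Y (Lam \<xi>0 uo) - DL mul e Y Dt"
    unfolding Xd_def using linear_add[OF linI] II III IV V by simp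
  have p1: "DP (frechet_derivative ginv (at X) Xd, 0) = - DF (Lam \<xi>0 uo) - DF Dt"
  proof -
    have "(frechet_derivative ginv (at X) Xd, 0::'m) = - (DL mul e Y (Lam \<xi>0 uo), 0) - (DL mul e Y Dt, 0)"
      using gXd by simp
    then have "DP (frechet_derivative ginv (at X) Xd, 0) = DP (- (DL mul e Y (Lam \<xi>0 uo), 0::'m) - (DL mul e Y Dt, 0))"
      by (simp only:)
    also have "\<dots> = - DP (DL mul e Y (Lam \<xi>0 uo), 0) - DP (DL mul e Y Dt, 0)"
      by (subst linear_diff[OF linDP], subst linear_neg[OF linDP], rule refl)
    finally have "DP (frechet_derivative ginv (at X) Xd, 0) = - DP (DL mul e Y (Lam \<xi>0 uo), 0) - DP (DL mul e Y Dt, 0)" .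
    then show ?thesis using VI[OF W1] VI[OF Dt] unfolding DP_def DF_def by simp
  qed
  have p2: "DP (0, f (u t) xt) = DF (Lam es uo)"
  proof -
    have "DP (0, f (u t) xt) = frechet_derivative (phi Y) (at xt) (f (u t) xt)"
      using Dsm2[OF phi_smooth, of Y xt "f (u t) xt"] unfolding DP_def by simp
    also have "\<dots> = f uo es" using equiv Y xt unfolding uo_def es_def by blast
    also have "\<dots> = DF (Lam es uo)" using Lam_lift es unfolding DF_def by metis
    finally show ?thesis .
  qed
  have val: "DP (frechet_derivative ginv (at X) Xd, f (u t) xt) = DF (Lam es uo - Lam \<xi>0 uo - Dt)"
    using lin_pair[OF linDP, of "frechet_derivative ginv (at X) Xd" "f (u t) xt"] p1 p2
      linear_diff[OF linDF] by simp
  have "((\<lambda>r. phi (ginv (Xh r)) (\<xi> r)) has_vector_derivative DF (Lam es uo - Lam \<xi>0 uo - Dt)) (at t within {0..})"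
    using h val by simp
  then show "((\<lambda>s. phi (ginv (Xh s)) (\<xi> s)) has_vector_derivative frechet_derivative (\<lambda>E. phi E (phi (ginv (Xh t)) (\<xi> t))) (at e) (Lam (phi (ginv (Xh t)) (\<xi> t)) (psi (ginv (Xh t)) (u t)) - Lam \<xi>0 (psi (ginv (Xh t)) (u t)) - \<Delta> t)) (at t within {0..})"
    unfolding DF_def es_def uo_def Y_def X_def xt_def Dt_def .
qed

end
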